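(* Let $\Delta=\{x\in\mathbb{R}^n:\ \ell_i(x)\ge0,\ i=1,\dots,d\}$ be a compact $n$-dimensional Delzant polytope with lattice distances $\ell_i(x)=c_i-\langle u_i,x\rangle$ to its facets, and let $\varphi(x,y)=\sum_{i=1}^d \ell_i(x)\log\ell_i(y)-\ell_i(y)$, with the convention that terms with $\ell_i(x)=0$ are omitted from the first sum (i.e. $0\cdot\log(\cdot)=0$). Let $F$ be a boundary face of $\Delta$ and $x$ a point in the relative interior of $F$. Then the restriction of $y\mapsto\varphi(x,y)$ to $F$ has a unique critical point, at $y=x$, and this point is the unique global maximum of $y\mapsto\varphi(x,y)$ on $\Delta$. Moreover, the derivatives of $y\mapsto\varphi(x,y)$ at $y=x$ in directions normal to $F$ are nonzero.
   Context: A Delzant polytope is a compact convex polytope $\{x:\langle u_i,x\rangle\le c_i\}$ with $u_i\in(\mathbb{Z}^n)^*$ primitive outward facet normals, $c_i\in\mathbb{Z}$, each vertex lying on exactly $n$ facets whose normals form a $\mathbb{Z}$-basis. A face $F$ is the set where $\ell_i=0$ for $i$ in some index set $I$. *)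

theory Defs
  imports "HOL-Analysis.Analysis"
begin

definition lat_dist :: "(nat \<Rightarrow> real^'n) \<Rightarrow> (nat \<Rightarrow> real) \<Rightarrow> nat \<Rightarrow> real^'n \<Rightarrow> real" where
  "lat_dist u c i x = c i - u i \<bullet> x"

definition dpoly :: "(nat \<Rightarrow> real^'n) \<Rightarrow> (nat \<Rightarrow> real) \<Rightarrow> nat \<Rightarrow> (real^'n) set" where
  "dpoly u c d = {x. \<forall>i<d. 0 \<le> lat_dist u c i x}"

definition int_vec :: "real^'n \<Rightarrow> bool" where
  "int_vec v \<longleftrightarrow> (\<forall>k. v $ k \<in> \<int>)"

definition primitive_vec :: "real^'n \<Rightarrow> bool" where
  "primitive_vec v \<longleftrightarrow> int_vec v \<and> (\<forall>w (m::nat). int_vec w \<and> v = of_nat m *\<^sub>R w \<longrightarrow> m = 1)"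

text \<open>Delzant polytope data: u_i primitive integral outward facet normals, c_i integers,
  compact n-dimensional polytope, each inequality cuts out a facet (distinct for distinct i),
  each vertex lies on exactly n facets whose normals form a Z-basis of Z^n.\<close>
definition delzant :: "(nat \<Rightarrow> real^'n) \<Rightarrow> (nat \<Rightarrow> real) \<Rightarrow> nat \<Rightarrow> bool" where
  "delzant u c d \<longleftrightarrow>
     (\<forall>i<d. primitive_vec (u i) \<and> c i \<in> \<int>) \<and>
     compact (dpoly u c d) \<and> interior (dpoly u c d) \<noteq> {} \<and>
     (\<forall>i<d. {x \<in> dpoly u c d. lat_dist u c i x = 0} facet_of dpoly u c d) \<and>
     (\<forall>i<d. \<forall>j<d. i \<noteq> j \<longrightarrow>
        {x \<in> dpoly u c d. lat_dist u c i x = 0} \<noteq> {x \<in> dpoly u c d. lat_dist u c j x = 0}) \<and>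
     (\<forall>v. v extreme_point_of (dpoly u c d) \<longrightarrow>
        card {i. i < d \<and> lat_dist u c i v = 0} = CARD('n) \<and>
        (\<forall>w. int_vec w \<longrightarrow> (\<exists>a::nat \<Rightarrow> int.
            w = (\<Sum>i\<in>{i. i < d \<and> lat_dist u c i v = 0}. of_int (a i) *\<^sub>R u i))))"

definition xlogy :: "real \<Rightarrow> real \<Rightarrow> ereal" where
  "xlogy a b = (if a = 0 then 0 else if b \<le> 0 then -\<infinity> else ereal (a * ln b))"

definition phi :: "(nat \<Rightarrow> real^'n) \<Rightarrow> (nat \<Rightarrow> real) \<Rightarrow> nat \<Rightarrow> real^'n \<Rightarrow> real^'n \<Rightarrow> ereal" where
  "phi u c d x y = (\<Sum>i<d. xlogy (lat_dist u c i x) (lat_dist u c i y))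
                   - ereal (\<Sum>i<d. lat_dist u c i y)"

end

theory Submission
  imports Defs
begin


lemma sum_minf_ereal:
  fixes f :: "'a \<Rightarrow> ereal"
  assumes "finite A" "\<forall>i\<in>A. f i \<noteq> \<infinity>" "\<exists>i\<in>A. f i = -\<infinity>"
  shows "sum f A = -\<infinity>"
  using assms
proof (induction A rule: finite_induct)
  case empty then show ?case by simp
next
  case (insert a A)
  have ne: "sum f A \<noteq> \<infinity>" using insert by (auto simp: sum_Pinfty)
  show ?case
  proof (cases "f a = -\<infinity>")
    case True then show ?thesis using insert ne by simp
  next
    case False
    then have "sum f A = -\<infinity>" using insert by auto
    then show ?thesis using insert by simp
  qed
qed

definition Phi where
  "Phi u c d x z = (\<Sum>i<d. (if lat_dist u c i x = 0 then 0 else lat_dist u c i x * ln (lat_dist u c i z)) - lat_dist u c i z)"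

definition DPhi where
  "DPhi u c d x z h = (\<Sum>i<d. (if lat_dist u c i x = 0 then 0 else - (lat_dist u c i x * (u i \<bullet> h) / lat_dist u c i z)) + u i \<bullet> h)"

lemma phi_fin:
  assumes "\<forall>i<d. lat_dist u c i x \<noteq> 0 \<longrightarrow> lat_dist u c i z > 0"
  shows "phi u c d x z = ereal (Phi u c d x z)"
proof -
  have "(\<Sum>i<d. xlogy (lat_dist u c i x) (lat_dist u c i z)) =
     (\<Sum>i<d. ereal (if lat_dist u c i x = 0 then 0 else lat_dist u c i x * ln (lat_dist u c i z)))"
    using assms by (intro sum.cong) (auto simp: xlogy_def)
  then show ?thesis unfolding phi_def Phi_def by (simp add: sum_subtractf)
qed

lemma phi_minf:
  assumes "i < d" "lat_dist u c i x \<noteq> 0" "lat_dist u c i z \<le> 0"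
  shows "phi u c d x z = -\<infinity>"
proof -
  have "(\<Sum>i<d. xlogy (lat_dist u c i x) (lat_dist u c i z)) = -\<infinity>"
    apply (rule sum_minf_ereal)
    using assms by (auto simp: xlogy_def intro!: bexI[of _ i])
  then show ?thesis unfolding phi_def by simp
qed

lemma lat_dist_deriv: "((\<lambda>z. lat_dist u c i z) has_derivative (\<lambda>h. - (u i \<bullet> h))) F"
  unfolding lat_dist_def by (auto intro!: derivative_eq_intros)

lemma Phi_deriv:
  assumes "\<forall>i<d. lat_dist u c i x \<noteq> 0 \<longrightarrow> lat_dist u c i z > 0"
  shows "(Phi u c d x has_derivative DPhi u c d x z) (at z)"
proof -
  have "((\<lambda>z. \<Sum>i<d. (if lat_dist u c i x = 0 then 0 else lat_dist u c i x * ln (lat_dist u c i z)) - lat_dist u c i z)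
     has_derivative (\<lambda>h. \<Sum>i<d. (if lat_dist u c i x = 0 then 0 else - (lat_dist u c i x * (u i \<bullet> h) / lat_dist u c i z)) + u i \<bullet> h)) (at z)"
  proof (rule has_derivative_sum)
    fix i assume i: "i \<in> {..<d}"
    show "((\<lambda>z. (if lat_dist u c i x = 0 then 0 else lat_dist u c i x * ln (lat_dist u c i z)) - lat_dist u c i z)
     has_derivative (\<lambda>h. (if lat_dist u c i x = 0 then 0 else - (lat_dist u c i x * (u i \<bullet> h) / lat_dist u c i z)) + u i \<bullet> h)) (at z)"
    proof (cases "lat_dist u c i x = 0")
      case True
      then show ?thesis using lat_dist_deriv[of u c i]
        by (auto intro!: derivative_eq_intros)
    next
      case False
      then have pos: "lat_dist u c i z > 0" using assms i by auto
      show ?thesis using False pos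
        by (auto intro!: derivative_eq_intros lat_dist_deriv simp: field_simps)
    qed
  qed
  then show ?thesis unfolding Phi_def[abs_def] DPhi_def[abs_def] by simp
qed



lemma span_lemma:
  assumes "bounded (dpoly u c d)" "x \<in> dpoly u c d" "\<forall>i<d. u i \<bullet> v = 0"
  shows "v = 0"
proof (rule ccontr)
  assume nz: "v \<noteq> 0"
  obtain B where B: "\<forall>z\<in>dpoly u c d. norm z \<le> B" using assms(1) bounded_iff by blast
  define t where "t = (B + norm x + 1) / norm v"
  have "x + t *\<^sub>R v \<in> dpoly u c d" using assms(2,3)
    by (auto simp: dpoly_def lat_dist_def inner_add_right)
  then have "norm (x + t *\<^sub>R v) \<le> B" using B by blast
  moreover have "norm (t *\<^sub>R v) \<le> norm (x + t *\<^sub>R v) + norm x"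
    by (metis add_diff_cancel_left' norm_triangle_ineq4)
  moreover have "norm (t *\<^sub>R v) = B + norm x + 1"
  proof -
    have "B \<ge> 0" using B assms(2) norm_ge_zero order_trans by blast
    then show ?thesis using nz by (simp add: t_def)
  qed
  ultimately show False by linarith
qed

lemma eq_lemma:
  assumes "bounded (dpoly u c d)" "x \<in> dpoly u c d" "\<forall>i<d. lat_dist u c i y = lat_dist u c i x"
  shows "y = x"
  using span_lemma[OF assms(1,2), of "y - x"] assms(3)
  by (auto simp: lat_dist_def inner_diff_right)

lemma convex_F: "convex {y \<in> dpoly u c d. \<forall>i\<in>I. lat_dist u c i y = 0}"
proof -
  have "{y \<in> dpoly u c d. \<forall>i\<in>I. lat_dist u c i y = 0} =
     (\<Inter>i\<in>{..<d}. {y. u i \<bullet> y \<le> c i}) \<inter> (\<Inter>i\<in>I. {y. u i \<bullet> y = c i})"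
    by (auto simp: dpoly_def lat_dist_def)
  moreover have "convex ((\<Inter>i\<in>{..<d}. {y. u i \<bullet> y \<le> c i}) \<inter> (\<Inter>i\<in>I. {y. u i \<bullet> y = c i}))"
    by (intro convex_Int convex_INT convex_halfspace_le convex_hyperplane)
  ultimately show ?thesis by simp
qed

lemma vanish_lemma:
  assumes "convex F" "x \<in> rel_interior F" "a \<in> F"
    "\<forall>z\<in>F. lat_dist u c i z \<ge> 0" "lat_dist u c i x = 0"
  shows "lat_dist u c i a = 0"
proof -
  have "a \<in> affine hull F" using assms(3) by (simp add: hull_inc)
  then obtain m where m: "m > 1" "\<forall>e. e > 1 \<and> e \<le> m \<longrightarrow> (1 - e) *\<^sub>R a + e *\<^sub>R x \<in> F"
    using convex_rel_interior_if[OF assms(1,2)] by blast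
  then have "(1 - m) *\<^sub>R a + m *\<^sub>R x \<in> F" by auto
  then have "lat_dist u c i ((1 - m) *\<^sub>R a + m *\<^sub>R x) \<ge> 0" using assms(4) by blast
  moreover have "lat_dist u c i ((1 - m) *\<^sub>R a + m *\<^sub>R x) = (1 - m) * lat_dist u c i a + m * lat_dist u c i x"
    by (simp add: lat_dist_def inner_add_right algebra_simps)
  ultimately have "(1 - m) * lat_dist u c i a \<ge> 0" using assms(5) by simp
  then have "lat_dist u c i a \<le> 0" using m(1)
    by (simp add: zero_le_mult_iff)
  then show ?thesis using assms(3,4) by force
qed

lemma seg_unique:
  fixes g :: "real^'n \<Rightarrow> real"
  assumes "convex F" "y \<in> F" "x \<in> F"
    "(g has_derivative f1) (at y within F)" "(g has_derivative f2) (at y within F)"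
  shows "f1 (x - y) = f2 (x - y)"
proof -
  define p where "p = (\<lambda>t::real. y + t *\<^sub>R (x - y))"
  have pd: "(p has_derivative (\<lambda>t. t *\<^sub>R (x - y))) (at 0 within cbox 0 1)"
    unfolding p_def by (auto intro!: derivative_eq_intros)
  have sub: "p ` cbox 0 1 \<subseteq> F"
  proof
    fix z assume "z \<in> p ` cbox 0 1"
    then obtain t where t: "0 \<le> t" "t \<le> 1" "z = p t" by auto
    have "z = (1 - t) *\<^sub>R y + t *\<^sub>R x" using t by (simp add: p_def algebra_simps)
    then show "z \<in> F" using assms(1-3) t by (simp add: convex_def)
  qed
  have p0: "p 0 = y" by (simp add: p_def)
  have d1: "((\<lambda>t. g (p t)) has_derivative (\<lambda>t. f1 (t *\<^sub>R (x - y)))) (at 0 within cbox 0 1)"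
    apply (rule has_derivative_in_compose[OF pd])
    using has_derivative_subset[OF assms(4) sub] p0 by simp
  have d2: "((\<lambda>t. g (p t)) has_derivative (\<lambda>t. f2 (t *\<^sub>R (x - y)))) (at 0 within cbox 0 1)"
    apply (rule has_derivative_in_compose[OF pd])
    using has_derivative_subset[OF assms(5) sub] p0 by simp
  have "(\<lambda>t. f1 (t *\<^sub>R (x - y))) = (\<lambda>t. f2 (t *\<^sub>R (x - y)))"
    by (rule frechet_derivative_unique_within_closed_interval[OF _ _ d1 d2]) auto
  then show ?thesis by (metis scaleR_one)
qed



theorem lemma4p2:
  fixes u :: "nat \<Rightarrow> real^'n" and c :: "nat \<Rightarrow> real" and d :: nat
    and I :: "nat set" and F :: "(real^'n) set" and x :: "real^'n"
  assumes "delzant u c d"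
    and "I \<subseteq> {..<d}"
    and "F = {y \<in> dpoly u c d. \<forall>i\<in>I. lat_dist u c i y = 0}"
    and "F \<noteq> dpoly u c d"
    and "x \<in> rel_interior F"
  shows "(\<forall>y\<in>F. (phi u c d x y \<noteq> -\<infinity> \<and>
            (\<exists>f'. ((\<lambda>z. real_of_ereal (phi u c d x z)) has_derivative f') (at y within F)
                  \<and> (\<forall>a\<in>F. f' (a - y) = 0))) \<longleftrightarrow> y = x)
       \<and> (\<forall>y\<in>dpoly u c d. y \<noteq> x \<longrightarrow> phi u c d x y < phi u c d x x)
       \<and> (\<exists>f'. ((\<lambda>z. real_of_ereal (phi u c d x z)) has_derivative f') (at x)
              \<and> (\<forall>a\<in>dpoly u c d. a \<notin> affine hull F \<longrightarrow> f' (a - x) \<noteq> 0))"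
proof -
  let ?L = "lat_dist u c"
  let ?P = "dpoly u c d"
  define U where "U = {z. \<forall>i<d. ?L i x \<noteq> 0 \<longrightarrow> ?L i z > 0}"
  have bnd: "bounded ?P" using assms(1) unfolding delzant_def using compact_imp_bounded by blast
  have cvx: "convex F" using convex_F assms(3) by simp
  have xF: "x \<in> F" using assms(5) rel_interior_subset by blast
  have xP: "x \<in> ?P" using xF assms(3) by simp
  have Lnn: "\<And>z i. z \<in> ?P \<Longrightarrow> i < d \<Longrightarrow> ?L i z \<ge> 0" by (simp add: dpoly_def)
  have xU: "x \<in> U" using Lnn[OF xP] by (force simp: U_def)
  have openU: "open U"
  proof -
    have "U = (\<Inter>i\<in>{i. i < d \<and> ?L i x \<noteq> 0}. {z. u i \<bullet> z < c i})"
      by (auto simp: U_def lat_dist_def)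
    moreover have "open (\<Inter>i\<in>{i. i < d \<and> ?L i x \<noteq> 0}. {z. u i \<bullet> z < c i})"
      by (intro open_INT) (auto intro: open_halfspace_lt)
    ultimately show ?thesis by simp
  qed
  have eqU: "\<And>z. z \<in> U \<Longrightarrow> real_of_ereal (phi u c d x z) = Phi u c d x z"
    using phi_fin[of d u c x] unfolding U_def by simp
  have derU: "\<And>z. z \<in> U \<Longrightarrow> ((\<lambda>z. real_of_ereal (phi u c d x z)) has_derivative DPhi u c d x z) (at z)"
  proof -
    fix z assume z: "z \<in> U"
    show "((\<lambda>z. real_of_ereal (phi u c d x z)) has_derivative DPhi u c d x z) (at z)"
      apply (rule has_derivative_transform_within_open[OF _ openU z])
       apply (rule Phi_deriv) using z eqU by (auto simp: U_def)
  qed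
  have DPx: "\<And>a. DPhi u c d x x (a - x) = (\<Sum>i<d. if ?L i x = 0 then - ?L i a else 0)"
    unfolding DPhi_def by (intro sum.cong) (auto simp: lat_dist_def inner_diff_right)
  have part3: "\<exists>f'. ((\<lambda>z. real_of_ereal (phi u c d x z)) has_derivative f') (at x)
              \<and> (\<forall>a\<in>?P. a \<notin> affine hull F \<longrightarrow> f' (a - x) \<noteq> 0)"
  proof (intro exI conjI ballI impI)
    show "((\<lambda>z. real_of_ereal (phi u c d x z)) has_derivative DPhi u c d x x) (at x)" using derU xU .
    fix a assume aP: "a \<in> ?P" and naff: "a \<notin> affine hull F"
    show "DPhi u c d x x (a - x) \<noteq> 0"
    proof
      assume "DPhi u c d x x (a - x) = 0"
      have "(\<Sum>i<d. if ?L i x = 0 then ?L i a else 0) = 0"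
      proof -
        have "(\<Sum>i<d. if ?L i x = 0 then - ?L i a else 0) = - (\<Sum>i<d. if ?L i x = 0 then ?L i a else 0)"
          unfolding sum_negf[symmetric] by (rule sum.cong) simp_all
        moreover have "(\<Sum>i<d. if ?L i x = 0 then - ?L i a else 0) = 0"
          using DPx[of a] \<open>DPhi u c d x x (a - x) = 0\<close> by argo
        ultimately show ?thesis by argo
      qed
      then have "\<forall>i\<in>{..<d}. (if ?L i x = 0 then ?L i a else 0) = 0"
        by (subst sum_nonneg_eq_0_iff[symmetric]) (auto simp: Lnn[OF aP])
      then have "\<forall>i\<in>I. ?L i a = 0" using assms(2,3) xF by force
      then have "a \<in> F" using aP assms(3) by simp
      then have "a \<in> affine hull F" by (rule hull_inc)
      then show False using naff by simp
    qed
  qed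
  have part2: "\<forall>y\<in>?P. y \<noteq> x \<longrightarrow> phi u c d x y < phi u c d x x"
  proof (intro ballI impI)
    fix y assume yP: "y \<in> ?P" and yx: "y \<noteq> x"
    have px: "phi u c d x x = ereal (Phi u c d x x)" using xU phi_fin unfolding U_def by auto
    show "phi u c d x y < phi u c d x x"
    proof (cases "y \<in> U")
      case False
      then obtain i where "i < d" "?L i x \<noteq> 0" "?L i y \<le> 0" unfolding U_def by force
      then show ?thesis using phi_minf[of i d u c x y] px by simp
    next
      case True
      have py: "phi u c d x y = ereal (Phi u c d x y)" using True phi_fin unfolding U_def by auto
      have le: "\<And>i. i < d \<Longrightarrow>
        (if ?L i x = 0 then 0 else ?L i x * ln (?L i y)) - ?L i y \<le>
        (if ?L i x = 0 then 0 else ?L i x * ln (?L i x)) - ?L i x"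
        and lt: "\<And>i. i < d \<Longrightarrow> ?L i y \<noteq> ?L i x \<Longrightarrow>
        (if ?L i x = 0 then 0 else ?L i x * ln (?L i y)) - ?L i y <
        (if ?L i x = 0 then 0 else ?L i x * ln (?L i x)) - ?L i x"
      proof -
        fix i assume i: "i < d"
        have key: "?L i x * ln (?L i y) - ?L i y \<le> ?L i x * ln (?L i x) - ?L i x
           \<and> (?L i y \<noteq> ?L i x \<longrightarrow> ?L i x * ln (?L i y) - ?L i y < ?L i x * ln (?L i x) - ?L i x)"
          if nz: "?L i x \<noteq> 0"
        proof -
          have a: "?L i x > 0" using Lnn[OF xP i] nz by simp
          have b: "?L i y > 0" using True i nz by (auto simp: U_def)
          define r where "r = ?L i y / ?L i x"
          have r: "r > 0" using a b by (simp add: r_def)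
          have lnr: "ln r = ln (?L i y) - ln (?L i x)" using a b by (simp add: r_def ln_div)
          have yr: "?L i y = r * ?L i x" using a by (simp add: r_def)
          have l1: "ln r \<le> r - 1" using ln_le_minus_one r by blast
          have l2: "r \<noteq> 1 \<Longrightarrow> ln r < r - 1"
          proof -
            assume "r \<noteq> 1"
            define q where "q = sqrt r"
            have q: "q > 0" "q * q = r" using r by (auto simp: q_def)
            have "q \<noteq> 1" using \<open>r \<noteq> 1\<close> q by auto
            have "ln r = ln q + ln q" using q ln_mult[of q q] by simp
            moreover have "ln q \<le> q - 1" using ln_le_minus_one q by blast
            moreover have "(q - 1) * (q - 1) > 0" using \<open>q \<noteq> 1\<close> by (simp add: not_square_less_zero less_le)
            moreover have "(q - 1) * (q - 1) = q * q - 2 * q + 1" by (simp add: algebra_simps)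
            ultimately show "ln r < r - 1" using q by linarith
          qed
          have "?L i x * ln (?L i y) - ?L i y - (?L i x * ln (?L i x) - ?L i x) = ?L i x * (ln r - (r - 1))"
            unfolding lnr yr by (simp add: algebra_simps)
          moreover have "?L i x * (ln r - (r - 1)) \<le> 0" using a l1 by (simp add: mult_nonneg_nonpos)
          moreover have "?L i y \<noteq> ?L i x \<Longrightarrow> ?L i x * (ln r - (r - 1)) < 0"
            using a l2 yr by (simp add: mult_pos_neg)
          ultimately show ?thesis by linarith
        qed
        show "(if ?L i x = 0 then 0 else ?L i x * ln (?L i y)) - ?L i y \<le>
          (if ?L i x = 0 then 0 else ?L i x * ln (?L i x)) - ?L i x"
          using key Lnn[OF yP i] by auto
        assume ne: "?L i y \<noteq> ?L i x"
        show "(if ?L i x = 0 then 0 else ?L i x * ln (?L i y)) - ?L i y <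
          (if ?L i x = 0 then 0 else ?L i x * ln (?L i x)) - ?L i x"
          using key ne Lnn[OF yP i] by auto
      qed
      obtain i0 where i0: "i0 < d" "?L i0 y \<noteq> ?L i0 x" using eq_lemma[OF bnd xP] yx by blast
      have "Phi u c d x y < Phi u c d x x" unfolding Phi_def
        apply (rule sum_strict_mono_ex1)
          apply simp
         apply (intro ballI, rule le, simp)
        apply (rule bexI[of _ i0], rule lt, (simp add: i0)+)
        done
      then show ?thesis using px py by simp
    qed
  qed
  have part1: "\<forall>y\<in>F. (phi u c d x y \<noteq> -\<infinity> \<and>
            (\<exists>f'. ((\<lambda>z. real_of_ereal (phi u c d x z)) has_derivative f') (at y within F)
                  \<and> (\<forall>a\<in>F. f' (a - y) = 0))) \<longleftrightarrow> y = x"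
  proof (intro ballI iffI)
    fix y assume yF: "y \<in> F" and "y = x"
    then have yx: "y = x" by simp
    have "phi u c d x x = ereal (Phi u c d x x)" using xU phi_fin unfolding U_def by auto
    moreover have "((\<lambda>z. real_of_ereal (phi u c d x z)) has_derivative DPhi u c d x x) (at x within F)"
      using derU[OF xU] has_derivative_at_withinI by blast
    moreover have "\<forall>a\<in>F. DPhi u c d x x (a - x) = 0"
    proof
      fix a assume aF: "a \<in> F"
      have "\<And>i. i < d \<Longrightarrow> ?L i x = 0 \<Longrightarrow> ?L i a = 0"
        using vanish_lemma[OF cvx assms(5) aF] Lnn assms(3) by auto
      then show "DPhi u c d x x (a - x) = 0" unfolding DPx by (intro sum.neutral) auto
    qed
    ultimately show "phi u c d x y \<noteq> -\<infinity> \<and>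
            (\<exists>f'. ((\<lambda>z. real_of_ereal (phi u c d x z)) has_derivative f') (at y within F)
                  \<and> (\<forall>a\<in>F. f' (a - y) = 0))" using yx by auto
  next
    fix y assume yF: "y \<in> F" and H: "phi u c d x y \<noteq> -\<infinity> \<and>
            (\<exists>f'. ((\<lambda>z. real_of_ereal (phi u c d x z)) has_derivative f') (at y within F)
                  \<and> (\<forall>a\<in>F. f' (a - y) = 0))"
    have yP: "y \<in> ?P" using yF assms(3) by simp
    have yU: "y \<in> U"
    proof (rule ccontr)
      assume "y \<notin> U"
      then obtain i where "i < d" "?L i x \<noteq> 0" "?L i y \<le> 0" unfolding U_def by force
      then show False using phi_minf H by blast
    qed
    obtain f' where f': "((\<lambda>z. real_of_ereal (phi u c d x z)) has_derivative f') (at y within F)"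
      "\<forall>a\<in>F. f' (a - y) = 0" using H by blast
    have D: "((\<lambda>z. real_of_ereal (phi u c d x z)) has_derivative DPhi u c d x y) (at y within F)"
      using derU[OF yU] has_derivative_at_withinI by blast
    have "DPhi u c d x y (x - y) = 0"
      using seg_unique[OF cvx yF xF f'(1) D] f'(2) xF by simp
    moreover have DPy: "DPhi u c d x y (x - y) = (\<Sum>i<d. if ?L i x = 0 then ?L i y else (?L i y - ?L i x)^2 / ?L i y)"
      unfolding DPhi_def
    proof (intro sum.cong refl)
      fix i assume i: "i \<in> {..<d}"
      have ud: "u i \<bullet> (x - y) = ?L i y - ?L i x" by (simp add: lat_dist_def inner_diff_right)
      show "(if ?L i x = 0 then 0 else - (?L i x * (u i \<bullet> (x - y)) / ?L i y)) + u i \<bullet> (x - y) =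
        (if ?L i x = 0 then ?L i y else (?L i y - ?L i x)^2 / ?L i y)"
      proof (cases "?L i x = 0")
        case True then show ?thesis using ud by simp
      next
        case False
        then have "?L i y > 0" using yU i by (auto simp: U_def)
        then show ?thesis using False unfolding ud by (simp add: field_simps power2_eq_square)
      qed
    qed
    ultimately have "(\<Sum>i<d. if ?L i x = 0 then ?L i y else (?L i y - ?L i x)^2 / ?L i y) = 0" by simp
    then have z: "\<forall>i\<in>{..<d}. (if ?L i x = 0 then ?L i y else (?L i y - ?L i x)^2 / ?L i y) = 0"
      by (subst sum_nonneg_eq_0_iff[symmetric]) (auto simp: Lnn[OF yP])
    have "\<forall>i<d. ?L i y = ?L i x"
    proof (intro allI impI)
      fix i assume i: "i < d"
      show "?L i y = ?L i x"
      proof (cases "?L i x = 0")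
        case True then show ?thesis using z[rule_format, of i] i by simp
      next
        case False
        then have "?L i y > 0" using yU i by (auto simp: U_def)
        then show ?thesis using z[rule_format, of i] i False by simp
      qed
    qed
    then show "y = x" using eq_lemma[OF bnd xP] by blast
  qed
  show ?thesis using part1 part2 part3 by blast
qed


end
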